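(* Let $h$ be the two-dimensional Euclid's hat function. For every integer $n\ge2$, every $s>0$ and every configuration $(\zeta_1,\dots,\zeta_n)$ with $\zeta_j=(\sigma_j,x_j)\in\{-1,1\}\times\mathbb{R}^2$, $$U_n(\zeta_1,\dots,\zeta_n;h(\cdot/s)):=\sum_{1\le i<j\le n}\sigma_i\sigma_j\,h\!\left(|x_i-x_j|/s\right)\ \ge\ -\frac{1}{2}\left(n-\Big|\sum_{j=1}^n\sigma_j\Big|\right).$$
   Context: The Euclid's hat is $h:[0,\infty)\to[0,1]$, $h(w)=\frac{2}{\pi}(\arccos w-w\sqrt{1-w^2})$ for $0\le w\le1$ and $h(w)=0$ for $w>1$; equivalently $h(|x|/s)=\frac{4}{\pi s^2}(\chi_{s/2}\ast\chi_{s/2})(x)$ where $\chi_r$ is the indicator of the disc of radius $r$ centered at $0$ in $\mathbb{R}^2$. Note $h(0)=1$. *)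

theory Defs
  imports "HOL-Analysis.Analysis"
begin

definition euclid_hat :: "real \<Rightarrow> real" where
  "euclid_hat w = (if 0 \<le> w \<and> w \<le> 1 then (2 / pi) * (arccos w - w * sqrt (1 - w\<^sup>2)) else 0)"

definition U_energy :: "nat \<Rightarrow> (nat \<Rightarrow> real) \<Rightarrow> (nat \<Rightarrow> real^2) \<Rightarrow> real \<Rightarrow> real" where
  "U_energy n \<sigma> x s =
     (\<Sum>j\<in>{1..n}. \<Sum>i\<in>{1..<j}. \<sigma> i * \<sigma> j * euclid_hat (dist (x i) (x j) / s))"

end

theory Submission
  imports Defs
begin

definition G :: "real \<Rightarrow> real \<Rightarrow> real" where
  "G r w = (w * sqrt (r\<^sup>2 - w\<^sup>2) + r\<^sup>2 * arcsin (w / r)) / 2"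

lemma G_deriv:
  assumes r: "r > 0" and w: "-r < w" "w < r"
  shows "(G r has_real_derivative sqrt (r\<^sup>2 - w\<^sup>2)) (at w)"
proof -
  have "r\<^sup>2 - w\<^sup>2 = (r - w) * (r + w)" by (simp add: algebra_simps power2_eq_square)
  then have pos: "r\<^sup>2 - w\<^sup>2 > 0" using w by simp
  have wr: "-1 < w / r" "w / r < 1" using w r by (auto simp: field_simps)
  have s1: "sqrt (1 - (w/r)\<^sup>2) = sqrt (r\<^sup>2 - w\<^sup>2) / r"
  proof -
    have "1 - (w/r)\<^sup>2 = (r\<^sup>2 - w\<^sup>2) / r\<^sup>2" using r by (simp add: field_simps power2_eq_square)
    then show ?thesis using r by (simp add: real_sqrt_divide)
  qed
  have sp: "sqrt (r\<^sup>2 - w\<^sup>2) > 0" using pos by simp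
  have q: "sqrt (r\<^sup>2 - w\<^sup>2) * sqrt (r\<^sup>2 - w\<^sup>2) = r\<^sup>2 - w\<^sup>2" using pos by simp
  have i1: "((\<lambda>w. r\<^sup>2 - w\<^sup>2) has_real_derivative (- 2 * w)) (at w)"
    by (auto intro!: derivative_eq_intros)
  have d1: "((\<lambda>w. sqrt (r\<^sup>2 - w\<^sup>2)) has_real_derivative (inverse (sqrt (r\<^sup>2 - w\<^sup>2)) / 2 * (- 2 * w))) (at w)"
    by (rule DERIV_chain2[OF DERIV_real_sqrt[OF pos] i1])
  have i2: "((\<lambda>w. w / r) has_real_derivative (1 / r)) (at w)"
    using r by (auto intro!: derivative_eq_intros)
  have d2: "((\<lambda>w. arcsin (w / r)) has_real_derivative (inverse (sqrt (1 - (w/r)\<^sup>2)) * (1 / r))) (at w)"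
    by (rule DERIV_chain2[OF DERIV_arcsin[OF wr] i2])
  have d3: "((\<lambda>w. w * sqrt (r\<^sup>2 - w\<^sup>2)) has_real_derivative (sqrt (r\<^sup>2 - w\<^sup>2) + w * (inverse (sqrt (r\<^sup>2 - w\<^sup>2)) / 2 * (- 2 * w)))) (at w)"
    using DERIV_mult[OF DERIV_ident d1] by (simp add: mult_ac)
  have d4: "(G r has_real_derivative ((sqrt (r\<^sup>2 - w\<^sup>2) + w * (inverse (sqrt (r\<^sup>2 - w\<^sup>2)) / 2 * (- 2 * w))) + r\<^sup>2 * (inverse (sqrt (1 - (w/r)\<^sup>2)) * (1 / r))) / 2) (at w)"
    unfolding G_def[abs_def]
    by (intro DERIV_cdivide DERIV_add d3 DERIV_cmult d2)
  have E: "((sqrt (r\<^sup>2 - w\<^sup>2) + w * (inverse (sqrt (r\<^sup>2 - w\<^sup>2)) / 2 * (- 2 * w))) + r\<^sup>2 * (inverse (sqrt (1 - (w/r)\<^sup>2)) * (1 / r))) / 2 = sqrt (r\<^sup>2 - w\<^sup>2)"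
    unfolding s1 using r sp q
    by (simp add: field_simps power2_eq_square)
  show ?thesis using d4 unfolding E .
qed


lemma G_cont: "r > 0 \<Longrightarrow> continuous_on {-r..r} (G r)"
  unfolding G_def
  by (intro continuous_intros) (auto simp: field_simps)

definition ell :: "real \<Rightarrow> real \<Rightarrow> real \<Rightarrow> real" where
  "ell r d u = 2 * sqrt (max 0 (min (r\<^sup>2 - u\<^sup>2) (r\<^sup>2 - (u - d)\<^sup>2)))"

lemma ell_int:
  assumes r: "r > 0" and d: "0 \<le> d" "d < 2 * r"
  shows "(ell r d has_integral (4 * (G r r - G r (d/2)))) {d - r..r}"
proof -
  let ?c = "d/2"
  have A: "(ell r d has_integral (2 * G r r - 2 * G r ?c)) {?c..r}"
  proof -
    have "((\<lambda>u. 2 * sqrt (r\<^sup>2 - u\<^sup>2)) has_integral ((\<lambda>u. 2 * G r u) r - (\<lambda>u. 2 * G r u) ?c)) {?c..r}"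
    proof (rule fundamental_theorem_of_calculus_interior)
      show "?c \<le> r" using d by simp
      show "continuous_on {?c..r} (\<lambda>u. 2 * G r u)"
        by (intro continuous_intros continuous_on_subset[OF G_cont[OF r]]) (use d in auto)
      fix x assume x: "x \<in> {?c<..<r}"
      show "((\<lambda>u. 2 * G r u) has_vector_derivative 2 * sqrt (r\<^sup>2 - x\<^sup>2)) (at x)"
        unfolding has_real_derivative_iff_has_vector_derivative[symmetric]
        using G_deriv[OF r, of x] x d by (auto intro!: derivative_eq_intros)
    qed
    moreover have "ell r d u = 2 * sqrt (r\<^sup>2 - u\<^sup>2)" if "u \<in> {?c..r}" for u
    proof -
      have "(u - d)\<^sup>2 \<le> u\<^sup>2" using that d by (simp add: abs_le_square_iff[symmetric] abs_if)
      moreover have "u\<^sup>2 \<le> r\<^sup>2" using that d by (simp add: power_mono)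
      ultimately show ?thesis unfolding ell_def by simp
    qed
    ultimately show ?thesis using has_integral_eq[of "{?c..r}" "\<lambda>u. 2 * sqrt (r\<^sup>2 - u\<^sup>2)" "ell r d"] by simp
  qed
  have B: "(ell r d has_integral (2 * G r r - 2 * G r ?c)) {d - r..?c}"
  proof -
    have "((\<lambda>u. 2 * sqrt (r\<^sup>2 - (d - u)\<^sup>2)) has_integral ((\<lambda>u. - 2 * G r (d - u)) ?c - (\<lambda>u. - 2 * G r (d - u)) (d - r))) {d - r..?c}"
    proof (rule fundamental_theorem_of_calculus_interior)
      show "d - r \<le> ?c" using d by simp
      show "continuous_on {d - r..?c} (\<lambda>u. - 2 * G r (d - u))"
        by (intro continuous_intros continuous_on_compose2[OF G_cont[OF r]]) (use d in auto)
      fix x assume x: "x \<in> {d - r<..<?c}"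
      have "(G r has_real_derivative sqrt (r\<^sup>2 - (d - x)\<^sup>2)) (at (d - x))"
        using G_deriv[OF r, of "d - x"] x d by auto
      then show "((\<lambda>u. - 2 * G r (d - u)) has_vector_derivative 2 * sqrt (r\<^sup>2 - (d - x)\<^sup>2)) (at x)"
        unfolding has_real_derivative_iff_has_vector_derivative[symmetric]
        by (auto intro!: derivative_eq_intros DERIV_chain2[where f="G r"])
    qed
    moreover have "ell r d u = 2 * sqrt (r\<^sup>2 - (d - u)\<^sup>2)" if "u \<in> {d - r..?c}" for u
    proof -
      have "u\<^sup>2 \<le> (u - d)\<^sup>2" using that d by (simp add: abs_le_square_iff[symmetric] abs_if)
      moreover have "(d - u)\<^sup>2 \<le> r\<^sup>2" using that d by (simp add: power_mono)
      moreover have "(u - d)\<^sup>2 = (d - u)\<^sup>2" by (simp add: power2_commute)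
      ultimately show ?thesis unfolding ell_def by simp
    qed
    moreover have "d - ?c = ?c" by simp
    ultimately show ?thesis using has_integral_eq[of "{d - r..?c}" "\<lambda>u. 2 * sqrt (r\<^sup>2 - (d - u)\<^sup>2)" "ell r d"] by simp
  qed
  have "(ell r d has_integral ((2 * G r r - 2 * G r ?c) + (2 * G r r - 2 * G r ?c))) {d - r..r}"
    by (rule has_integral_combine[OF _ _ B A]) (use d in auto)
  then show ?thesis by (simp add: algebra_simps)
qed


lemma abs_sqrt_sq: "\<bar>v\<bar> = sqrt ((v::real)\<^sup>2)" by simp
lemma sq_less_iff: "(v::real)\<^sup>2 < m \<longleftrightarrow> \<bar>v\<bar> < sqrt m"
  by (simp only: abs_sqrt_sq real_sqrt_less_iff)
lemma sq_less_set: "m > 0 \<Longrightarrow> {v::real. v\<^sup>2 < m} = {- sqrt m <..< sqrt m}"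
  unfolding sq_less_iff by (auto simp: abs_less_iff)

lemma emeasure_sq_less: "emeasure lborel {v::real. v\<^sup>2 < m} = ennreal (2 * sqrt (max 0 m))"
proof (cases "m > 0")
  case True
  then show ?thesis by (simp add: sq_less_set)
next
  case False
  have "\<not> v\<^sup>2 < m" for v :: real using False zero_le_power2[of v] by linarith
  then have "{v::real. v\<^sup>2 < m} = {}" by blast
  then show ?thesis using False by simp
qed

lemma ell_zero: "u \<notin> {d - r..r} \<Longrightarrow> r > 0 \<Longrightarrow> ell r d u = 0"
proof -
  assume u: "u \<notin> {d - r..r}" and r: "r > 0"
  have "min (r\<^sup>2 - u\<^sup>2) (r\<^sup>2 - (u - d)\<^sup>2) \<le> 0"
  proof (cases "u > r")
    case True
    then have "r\<^sup>2 \<le> u\<^sup>2" using r by (intro power_mono) auto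
    then show ?thesis by simp
  next
    case False
    then have "u < d - r" using u by auto
    then have "r\<^sup>2 \<le> (d - u)\<^sup>2" using r by (intro power_mono) auto
    then have "r\<^sup>2 \<le> (u - d)\<^sup>2" by (simp add: power2_commute)
    then show ?thesis by simp
  qed
  then have "max 0 (min (r\<^sup>2 - u\<^sup>2) (r\<^sup>2 - (u - d)\<^sup>2)) = 0" by (rule max_absorb1)
  then show ?thesis unfolding ell_def by simp
qed

lemma lens_prod:
  assumes r: "r > 0" and d: "0 \<le> d" "d < 2 * r"
  shows "emeasure (lborel :: (real \<times> real) measure)
           {p. (fst p)\<^sup>2 + (snd p)\<^sup>2 < r\<^sup>2 \<and> (fst p - d)\<^sup>2 + (snd p)\<^sup>2 < r\<^sup>2}
         = ennreal (4 * (G r r - G r (d/2)))"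
proof -
  let ?A = "{p::real\<times>real. (fst p)\<^sup>2 + (snd p)\<^sup>2 < r\<^sup>2 \<and> (fst p - d)\<^sup>2 + (snd p)\<^sup>2 < r\<^sup>2}"
  have "?A \<in> sets borel"
    by (intro borel_open open_Collect_conj open_Collect_less continuous_intros)
  then have meas: "?A \<in> sets (lborel \<Otimes>\<^sub>M lborel)" by (simp only: lborel_prod sets_lborel)
  have "emeasure (lborel :: (real \<times> real) measure) ?A = emeasure (lborel \<Otimes>\<^sub>M lborel) ?A"
    by (simp add: lborel_prod)
  also have "\<dots> = (\<integral>\<^sup>+u. emeasure lborel (Pair u -` ?A) \<partial>lborel)"
    by (rule lborel.emeasure_pair_measure_alt[OF meas])
  also have "\<dots> = (\<integral>\<^sup>+u. ennreal (ell r d u) \<partial>lborel)"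
  proof (rule nn_integral_cong)
    fix u :: real
    have "Pair u -` ?A = {v. v\<^sup>2 < min (r\<^sup>2 - u\<^sup>2) (r\<^sup>2 - (u - d)\<^sup>2)}" by auto
    then show "emeasure lborel (Pair u -` ?A) = ennreal (ell r d u)"
      unfolding ell_def emeasure_sq_less[symmetric] by (simp only:)
  qed
  also have "\<dots> = (\<integral>\<^sup>+u. ennreal (ell r d u) * indicator {d - r..r} u \<partial>lborel)"
    by (rule nn_integral_cong) (use ell_zero r in \<open>auto simp: indicator_def\<close>)
  also have "\<dots> = ennreal (4 * (G r r - G r (d/2)))"
    by (rule nn_integral_has_integral_lebesgue'[OF _ ell_int[OF r d]]) (simp add: ell_def)
  finally show ?thesis .
qed


definition phi2 :: "real \<times> real \<Rightarrow> real^2" where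
  "phi2 p = (\<chi> i. if i = 1 then fst p else snd p)"

lemma phi2_nth [simp]: "phi2 p $ 1 = fst p" "phi2 p $ 2 = snd p"
  by (simp_all add: phi2_def)

lemma Basis_real2: "(Basis :: (real^2) set) = {axis 1 1, axis 2 1}"
  by (auto simp: Basis_vec_def) (metis exhaust_2)

lemma phi2_meas [measurable]: "phi2 \<in> borel \<rightarrow>\<^sub>M borel"
  unfolding phi2_def
proof (intro borel_measurable_continuous_onI continuous_on_vec_lambda)
  fix i :: 2 show "continuous_on UNIV (\<lambda>x::real\<times>real. if i = 1 then fst x else snd x)"
    by (cases "i = 1") (auto intro!: continuous_intros)
qed

lemma lborel_real2: "distr lborel borel phi2 = (lborel :: (real^2) measure)"
proof (rule lborel_eqI[symmetric])
  fix l u :: "real^2" assume le0: "\<And>b. b\<in>Basis \<Longrightarrow> l \<bullet> b \<le> u \<bullet> b"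
  have le: "l$1 \<le> u$1" "l$2 \<le> u$2" using le0[of "axis 1 1"] le0[of "axis 2 1"]
    by (simp_all add: Basis_real2 inner_axis)
  have pre: "phi2 -` box l u = {l$1<..<u$1} \<times> {l$2<..<u$2}"
  proof (rule set_eqI)
    fix p :: "real \<times> real"
    show "p \<in> phi2 -` box l u \<longleftrightarrow> p \<in> {l$1<..<u$1} \<times> {l$2<..<u$2}"
      unfolding vimage_eq mem_box_cart forall_2 by (cases p) simp
  qed
  have "emeasure (distr lborel borel phi2) (box l u) = emeasure (lborel :: (real\<times>real) measure) (phi2 -` box l u)"
  proof -
    have m: "phi2 \<in> lborel \<rightarrow>\<^sub>M borel" using phi2_meas by (simp only: measurable_lborel2)
    have b: "box l u \<in> sets borel" by (simp add: borel_open)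
    show ?thesis using emeasure_distr[OF m b] by simp
  qed
  also have "\<dots> = emeasure (lborel \<Otimes>\<^sub>M lborel) ({l$1<..<u$1} \<times> {l$2<..<u$2})"
    by (simp add: pre lborel_prod)
  also have "\<dots> = ennreal (u$1 - l$1) * ennreal (u$2 - l$2)"
    using le by (simp add: lborel.emeasure_pair_measure_Times)
  also have "\<dots> = ennreal ((u$1 - l$1) * (u$2 - l$2))"
    using le by (simp add: ennreal_mult)
  also have "(u$1 - l$1) * (u$2 - l$2) = (\<Prod>b\<in>Basis. (u - l) \<bullet> b)"
  proof -
    have "axis 1 1 \<noteq> (axis 2 1 :: real^2)" by (simp add: axis_eq_axis)
    then show ?thesis by (simp add: Basis_real2 inner_axis)
  qed
  finally show "emeasure (distr lborel borel phi2) (box l u) = (\<Prod>b\<in>Basis. (u - l) \<bullet> b)" .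
qed simp


lemma norm2_real2: "(norm (z::real^2))\<^sup>2 = (z$1)\<^sup>2 + (z$2)\<^sup>2"
  by (simp only: power2_norm_eq_inner) (simp add: inner_vec_def sum_2 power2_eq_square)

lemma norm_less_real2: "r > 0 \<Longrightarrow> norm (z::real^2) < r \<longleftrightarrow> (z$1)\<^sup>2 + (z$2)\<^sup>2 < r\<^sup>2"
proof -
  assume r: "r > 0"
  have "norm z = sqrt ((norm z)\<^sup>2)" by simp
  moreover have "r = sqrt (r\<^sup>2)" using r by simp
  ultimately have "norm z < r \<longleftrightarrow> sqrt ((norm z)\<^sup>2) < sqrt (r\<^sup>2)" by simp
  also have "\<dots> \<longleftrightarrow> (norm z)\<^sup>2 < r\<^sup>2" by (rule real_sqrt_less_iff)
  finally show ?thesis by (simp add: norm2_real2)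
qed

lemma G_nonneg: "r > 0 \<Longrightarrow> 0 \<le> d \<Longrightarrow> d < 2 * r \<Longrightarrow> 0 \<le> 4 * (G r r - G r (d/2))"
  by (rule has_integral_nonneg[OF ell_int]) (auto simp: ell_def)

lemma lens_axis:
  assumes r: "r > 0" and d: "0 \<le> d" "d < 2 * r"
  shows "measure lebesgue (ball 0 r \<inter> ball (d *\<^sub>R axis 1 1) r :: (real^2) set) = 4 * (G r r - G r (d/2))"
proof -
  let ?S = "ball 0 r \<inter> ball (d *\<^sub>R axis 1 1) r :: (real^2) set"
  let ?A = "{p::real\<times>real. (fst p)\<^sup>2 + (snd p)\<^sup>2 < r\<^sup>2 \<and> (fst p - d)\<^sup>2 + (snd p)\<^sup>2 < r\<^sup>2}"
  have Sb: "?S \<in> sets borel" by (simp add: borel_open open_Int)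
  have pre: "phi2 -` ?S = ?A"
  proof (rule set_eqI)
    fix p :: "real \<times> real"
    have e1: "dist 0 (phi2 p) < r \<longleftrightarrow> (fst p)\<^sup>2 + (snd p)\<^sup>2 < r\<^sup>2"
      unfolding dist_norm using norm_less_real2[OF r, of "0 - phi2 p"] by simp
    have e2: "dist (d *\<^sub>R axis 1 1) (phi2 p) < r \<longleftrightarrow> (fst p - d)\<^sup>2 + (snd p)\<^sup>2 < r\<^sup>2"
    proof -
      have "dist (d *\<^sub>R axis 1 1) (phi2 p) = norm (phi2 p - d *\<^sub>R axis 1 1)" by (simp add: dist_norm norm_minus_commute)
      moreover have "(phi2 p - d *\<^sub>R axis 1 1) $ 1 = fst p - d" "(phi2 p - d *\<^sub>R axis 1 1) $ 2 = snd p"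
        by (simp_all add: axis_def)
      moreover have "(axis 1 1 :: real^2) $ 2 = 0" by (simp add: axis_def)
      ultimately show ?thesis using norm_less_real2[OF r, of "phi2 p - d *\<^sub>R axis 1 1"] by simp
    qed
    show "p \<in> phi2 -` ?S \<longleftrightarrow> p \<in> ?A" using e1 e2 by simp
  qed
  have m: "phi2 \<in> lborel \<rightarrow>\<^sub>M borel" using phi2_meas by (simp only: measurable_lborel2)
  have "emeasure (lborel :: (real^2) measure) ?S = emeasure (distr lborel borel phi2) ?S"
    by (simp only: lborel_real2)
  also have "\<dots> = emeasure lborel (phi2 -` ?S)"
    using emeasure_distr[OF m Sb] by simp
  also have "\<dots> = ennreal (4 * (G r r - G r (d/2)))"
    unfolding pre by (rule lens_prod[OF r d])
  finally have "emeasure (lborel :: (real^2) measure) ?S = ennreal (4 * (G r r - G r (d/2)))" .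
  then have "measure lborel ?S = 4 * (G r r - G r (d/2))"
    unfolding measure_def using G_nonneg[OF r d] by simp
  then show ?thesis using Sb by simp
qed


lemma alg_aux: "(p::real) \<noteq> 0 \<Longrightarrow> 4 * (r\<^sup>2 * p / 4 - (r * w * (r * q) + r\<^sup>2 * (p/2 - A)) / 2) = p * r\<^sup>2 * ((2/p) * (A - w * q))"
  by (simp add: field_simps power2_eq_square)

lemma G_formula:
  assumes r: "r > 0" and d: "0 \<le> d" "d < 2 * r"
  shows "4 * (G r r - G r (d/2)) = pi * r\<^sup>2 * euclid_hat (d / (2 * r))"
proof -
  define w where "w = d / (2 * r)"
  have w: "0 \<le> w" "w < 1" using r d by (auto simp: w_def field_simps)
  have dw: "d / 2 = r * w" using r by (simp add: w_def)
  have dr: "d / 2 / r = w" using r by (simp add: w_def)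
  have sq: "sqrt (r\<^sup>2 - (r * w)\<^sup>2) = r * sqrt (1 - w\<^sup>2)"
  proof -
    have "r\<^sup>2 - (r * w)\<^sup>2 = r\<^sup>2 * (1 - w\<^sup>2)" by (simp add: algebra_simps power2_eq_square)
    then show ?thesis using r by (simp add: real_sqrt_mult)
  qed
  have Grr: "G r r = r\<^sup>2 * pi / 4" using r by (simp add: G_def)
  have Gc: "G r (d/2) = (r * w * (r * sqrt (1 - w\<^sup>2)) + r\<^sup>2 * arcsin w) / 2"
  proof -
    have "G r (r * w) = (r * w * (r * sqrt (1 - w\<^sup>2)) + r\<^sup>2 * arcsin w) / 2"
      unfolding G_def sq using r by simp
    then show ?thesis by (simp only: dw)
  qed
  have as: "arcsin w = pi/2 - arccos w" using w by (intro arcsin_arccos_eq) auto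
  have eh: "euclid_hat w = (2 / pi) * (arccos w - w * sqrt (1 - w\<^sup>2))"
    using w by (simp add: euclid_hat_def)
  show ?thesis unfolding w_def[symmetric] eh Grr Gc as
    by (rule alg_aux) simp
qed

lemma euclid_hat_ge1: "w \<ge> 1 \<Longrightarrow> euclid_hat w = 0"
  by (auto simp: euclid_hat_def)

lemma lens:
  fixes a b :: "real^2"
  assumes r: "r > 0"
  shows "measure lebesgue (ball a r \<inter> ball b r) = pi * r\<^sup>2 * euclid_hat (dist a b / (2 * r))"
proof (cases "dist a b < 2 * r")
  case False
  have "ball a r \<inter> ball b r = {}"
  proof (rule ccontr)
    assume "ball a r \<inter> ball b r \<noteq> {}"
    then obtain z where "dist a z < r" "dist b z < r" by auto
    then have "dist a b < 2 * r" using dist_triangle3[of a b z] dist_commute[of z a] dist_commute[of z b] by linarith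
    then show False using False by simp
  qed
  moreover have "euclid_hat (dist a b / (2 * r)) = 0"
    using False r by (intro euclid_hat_ge1) (simp add: field_simps)
  ultimately show ?thesis by simp
next
  case True
  define v where "v = b - a"
  define d where "d = norm v"
  have dd: "d = dist a b" by (simp add: d_def v_def dist_norm norm_minus_commute)
  obtain f :: "real^2 \<Rightarrow> real^2" where f: "orthogonal_transformation f" "f (norm v *\<^sub>R axis 1 1) = v"
    using rotation_rightward_line[of v 1] by blast
  let ?S0 = "ball 0 r \<inter> ball (d *\<^sub>R axis 1 1) r :: (real^2) set"
  have S0m: "?S0 \<in> lmeasurable" by (intro fmeasurable_Int_fmeasurable) auto
  have f0: "f 0 = 0" using f(1) by (simp add: orthogonal_transformation linear_0)
  have fS0: "f ` ?S0 = ball 0 r \<inter> ball v r"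
    using f f0 by (simp add: image_Int orthogonal_transformation_inj image_orthogonal_transformation_ball d_def)
  have tr: "(+) a ` (ball 0 r \<inter> ball v r) = ball a r \<inter> ball b r"
    by (simp add: image_Int v_def)
  have "measure lebesgue (ball a r \<inter> ball b r) = measure lebesgue (ball 0 r \<inter> ball v r)"
    by (simp only: tr[symmetric] measure_translation)
  also have "\<dots> = measure lebesgue ?S0"
    unfolding fS0[symmetric] by (rule measure_orthogonal_image[OF f(1) S0m])
  also have "\<dots> = 4 * (G r r - G r (d/2))"
    using True r by (intro lens_axis) (auto simp: dd)
  also have "\<dots> = pi * r\<^sup>2 * euclid_hat (d / (2 * r))"
    using True r by (intro G_formula) (auto simp: dd)
  finally show ?thesis by (simp add: dd)
qed


lemma euclid_hat_0: "euclid_hat 0 = 1"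
  by (simp add: euclid_hat_def)

lemma int_abs_le_sq: "(y::real) \<in> \<int> \<Longrightarrow> \<bar>y\<bar> \<le> y * y"
proof -
  assume "y \<in> \<int>"
  then obtain k where k: "y = of_int k" by (auto elim: Ints_cases)
  have "\<bar>k\<bar> \<le> k * k"
  proof (cases "k = 0")
    case False
    then have "1 \<le> \<bar>k\<bar>" by simp
    then have "\<bar>k\<bar> * 1 \<le> \<bar>k\<bar> * \<bar>k\<bar>" by (intro mult_left_mono) auto
    then show ?thesis by (simp add: abs_mult_self_eq)
  qed simp
  then have "of_int \<bar>k\<bar> \<le> (of_int (k * k) :: real)" by (simp only: of_int_le_iff)
  then show ?thesis by (simp add: k)
qed

lemma key_ineq:
  fixes I :: "nat set" and \<sigma> :: "nat \<Rightarrow> real" and x :: "nat \<Rightarrow> real^2" and r :: real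
  assumes I: "finite I" and r: "r > 0" and sig: "\<And>j. j \<in> I \<Longrightarrow> \<sigma> j \<in> {-1, 1}"
  shows "\<bar>\<Sum>j\<in>I. \<sigma> j\<bar> \<le> (\<Sum>i\<in>I. \<Sum>j\<in>I. \<sigma> i * \<sigma> j * euclid_hat (dist (x i) (x j) / (2 * r)))"
proof -
  define B where "B j = ball (x j) r" for j
  define c where "c = pi * r\<^sup>2"
  have c: "c > 0" using r by (simp add: c_def)
  have Bs: "B i \<inter> B j \<in> sets lebesgue" "emeasure lebesgue (B i \<inter> B j) < \<infinity>" for i j
  proof -
    have "B i \<inter> B j \<in> lmeasurable" unfolding B_def by (intro fmeasurable_Int_fmeasurable) auto
    then show "B i \<inter> B j \<in> sets lebesgue" "emeasure lebesgue (B i \<inter> B j) < \<infinity>"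
      using fmeasurableD2[of "B i \<inter> B j" lebesgue] by (auto simp only: less_top fmeasurableD infinity_ennreal_def)
  qed
  have Bs1: "B j \<in> sets lebesgue" "emeasure lebesgue (B j) < \<infinity>" for j
    using Bs[of j j] by simp_all
  have mB2: "measure lebesgue (B i \<inter> B j) = c * euclid_hat (dist (x i) (x j) / (2 * r))" for i j
    unfolding B_def c_def using lens[OF r] by simp
  have mB1: "measure lebesgue (B j) = c" for j
    using mB2[of j j] by (simp add: euclid_hat_0)
  define F where "F z = (\<Sum>j\<in>I. \<sigma> j * indicator (B j) z)" for z :: "real^2"
  have intF: "integrable lebesgue F"
    unfolding F_def by (intro Bochner_Integration.integrable_sum integrable_mult_right integrable_real_indicator Bs1)
  have F2: "F z * F z = (\<Sum>i\<in>I. \<Sum>j\<in>I. \<sigma> i * \<sigma> j * indicator (B i \<inter> B j) z)" for z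
    unfolding F_def sum_product
    by (intro sum.cong refl) (simp add: indicator_inter_arith mult_ac)
  have intF2: "integrable lebesgue (\<lambda>z. F z * F z)"
    unfolding F2 by (intro Bochner_Integration.integrable_sum integrable_mult_right integrable_real_indicator Bs)
  have iF: "integral\<^sup>L lebesgue F = c * (\<Sum>j\<in>I. \<sigma> j)"
  proof -
    have "integral\<^sup>L lebesgue F = (\<Sum>j\<in>I. \<sigma> j * measure lebesgue (B j))"
      unfolding F_def using Bs1 by (subst Bochner_Integration.integral_sum) auto
    then show ?thesis by (simp add: mB1 sum_distrib_left mult_ac)
  qed
  have iF2: "integral\<^sup>L lebesgue (\<lambda>z. F z * F z) = c * (\<Sum>i\<in>I. \<Sum>j\<in>I. \<sigma> i * \<sigma> j * euclid_hat (dist (x i) (x j) / (2 * r)))"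
  proof -
    have "integral\<^sup>L lebesgue (\<lambda>z. F z * F z) = (\<Sum>i\<in>I. \<Sum>j\<in>I. \<sigma> i * \<sigma> j * measure lebesgue (B i \<inter> B j))"
      unfolding F2 using Bs by (simp add: Bochner_Integration.integral_sum Bochner_Integration.integrable_sum)
    then show ?thesis by (simp add: mB2 sum_distrib_left mult_ac)
  qed
  have Fint: "F z \<in> \<int>" for z
  proof -
    have "\<sigma> j * indicator (B j) z \<in> \<int>" if "j \<in> I" for j
      using sig[OF that] by (auto simp: indicator_def)
    then show ?thesis unfolding F_def by (intro Ints_sum) auto
  qed
  have "\<bar>integral\<^sup>L lebesgue F\<bar> \<le> integral\<^sup>L lebesgue (\<lambda>z. \<bar>F z\<bar>)" by (rule Bochner_Integration.integral_abs_bound)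
  also have "\<dots> \<le> integral\<^sup>L lebesgue (\<lambda>z. F z * F z)"
    using intF intF2 int_abs_le_sq[OF Fint] by (intro Bochner_Integration.integral_mono) auto
  finally have "c * \<bar>\<Sum>j\<in>I. \<sigma> j\<bar> \<le> c * (\<Sum>i\<in>I. \<Sum>j\<in>I. \<sigma> i * \<sigma> j * euclid_hat (dist (x i) (x j) / (2 * r)))"
    unfolding iF iF2 using c by (simp add: abs_mult)
  then show ?thesis using c by simp
qed


theorem theorem2p6:
  fixes n :: nat and s :: real and \<sigma> :: "nat \<Rightarrow> real" and x :: "nat \<Rightarrow> real^2"
  assumes "n \<ge> 2" and "s > 0"
    and "\<And>j. j \<in> {1..n} \<Longrightarrow> \<sigma> j \<in> {-1, 1}"
  shows "U_energy n \<sigma> x s \<ge> - (1/2) * (real n - \<bar>\<Sum>j\<in>{1..n}. \<sigma> j\<bar>)"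
proof -
  let ?I = "{1..n}"
  define g where "g i j = \<sigma> i * \<sigma> j * euclid_hat (dist (x i) (x j) / s)" for i j
  have gs: "g i j = g j i" for i j by (simp add: g_def dist_commute mult_ac)
  have gd: "g j j = 1" if "j \<in> ?I" for j
    using assms(3)[OF that] by (auto simp: g_def euclid_hat_0)
  define U where "U = (\<Sum>j\<in>?I. \<Sum>i\<in>{1..<j}. g i j)"
  have UE: "U_energy n \<sigma> x s = U" by (simp add: U_energy_def U_def g_def)
  have key: "\<bar>\<Sum>j\<in>?I. \<sigma> j\<bar> \<le> (\<Sum>i\<in>?I. \<Sum>j\<in>?I. g i j)"
    using key_ineq[of ?I "s/2" \<sigma> x] assms by (simp add: g_def)
  have split: "(\<Sum>i\<in>?I. g i j) = (\<Sum>i\<in>{1..<j}. g i j) + 1 + (\<Sum>i\<in>?I. if j < i then g i j else 0)"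
    if j: "j \<in> ?I" for j
  proof -
    have "(\<Sum>i\<in>?I. g i j) = (\<Sum>i\<in>?I. (if i < j then g i j else 0) + (if i = j then g i j else 0) + (if j < i then g i j else 0))"
      by (intro sum.cong refl) auto
    also have "\<dots> = (\<Sum>i\<in>?I. if i < j then g i j else 0) + (\<Sum>i\<in>?I. if i = j then g i j else 0) + (\<Sum>i\<in>?I. if j < i then g i j else 0)"
      by (simp add: sum.distrib)
    also have "(\<Sum>i\<in>?I. if i < j then g i j else 0) = (\<Sum>i\<in>{i\<in>?I. i < j}. g i j)"
      by (simp only: sum.inter_filter[OF finite_atLeastAtMost])
    also have "{i\<in>?I. i < j} = {1..<j}" using j by auto
    also have "(\<Sum>i\<in>?I. if i = j then g i j else 0) = 1"
      using j gd[OF j] by (simp add: sum.delta')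
    finally show ?thesis .
  qed
  have third: "(\<Sum>j\<in>?I. \<Sum>i\<in>?I. if j < i then g i j else 0) = U"
  proof -
    have "(\<Sum>j\<in>?I. \<Sum>i\<in>?I. if j < i then g i j else 0) = (\<Sum>i\<in>?I. \<Sum>j\<in>?I. if j < i then g i j else 0)"
      by (rule sum.swap)
    also have "\<dots> = (\<Sum>i\<in>?I. \<Sum>j\<in>{1..<i}. g j i)"
    proof (rule sum.cong[OF refl])
      fix i assume i: "i \<in> ?I"
      have "(\<Sum>j\<in>?I. if j < i then g i j else 0) = (\<Sum>j\<in>{j\<in>?I. j < i}. g i j)"
        by (simp only: sum.inter_filter[OF finite_atLeastAtMost])
      also have "{j\<in>?I. j < i} = {1..<i}" using i by auto
      finally show "(\<Sum>j\<in>?I. if j < i then g i j else 0) = (\<Sum>j\<in>{1..<i}. g j i)"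
        by (simp add: gs)
    qed
    finally show ?thesis by (simp add: U_def)
  qed
  have "(\<Sum>i\<in>?I. \<Sum>j\<in>?I. g i j) = (\<Sum>j\<in>?I. \<Sum>i\<in>?I. g i j)"
    by (rule sum.swap)
  also have "\<dots> = (\<Sum>j\<in>?I. (\<Sum>i\<in>{1..<j}. g i j) + 1 + (\<Sum>i\<in>?I. if j < i then g i j else 0))"
    by (intro sum.cong refl split) 
  also have "\<dots> = (\<Sum>j\<in>?I. \<Sum>i\<in>{1..<j}. g i j) + (\<Sum>j\<in>?I. 1) + (\<Sum>j\<in>?I. \<Sum>i\<in>?I. if j < i then g i j else 0)"
    by (simp only: sum.distrib)
  also have "\<dots> = U + real n + U"
    by (simp only: third U_def[symmetric]) simp
  finally have "(\<Sum>i\<in>?I. \<Sum>j\<in>?I. g i j) = 2 * U + real n" by simp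
  then have h: "\<bar>\<Sum>j\<in>?I. \<sigma> j\<bar> \<le> 2 * U + real n" using key by simp
  have "- (1/2) * (real n - \<bar>\<Sum>j\<in>?I. \<sigma> j\<bar>) = (\<bar>\<Sum>j\<in>?I. \<sigma> j\<bar> - real n) / 2"
    by (simp add: field_simps)
  also have "\<dots> \<le> U" using h by (simp add: field_simps)
  finally show ?thesis by (simp add: UE)
qed

end
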